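(* Let $n$ be a positive squarefree integer and $Y>0$. Then for every $\epsilon>0$, \[ \#\{f\in\Sigma_n^{\mathrm{red}}: h(f)<Y\}\ll_\epsilon Y^3/n^{1-\epsilon}+n^\epsilon Y . \]
   Context: For a ring $R$, $V(R)$ is the set of monic cubic polynomials $x^3+tx^2+Ax+B$ with $t\in\{-1,0,1\}$ and $A,B\in R$; $\Delta(f)$ is the discriminant and $h(f)$ is the maximum absolute value of the complex roots of $f$. For $f\in V(\mathbb{Z})$ with $\Delta(f)\ne0$, $\mathrm{ind}(f)$ is the index of $\mathbb{Z}[x]/(f)$ in the ring of integral elements of $\mathbb{Q}[x]/(f)$. $\Sigma_n$ is the set of $f\in V(\mathbb{Z})$ with $\Delta(f)\neq0$ and $n\mid\mathrm{ind}(f)$, and $\Sigma_n^{\mathrm{red}}$ is the set of polynomials in $\Sigma_n$ that are reducible over $\mathbb{Q}$. *)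

theory Defs
  imports Complex_Main "HOL-Computational_Algebra.Computational_Algebra"
begin

definition VZ :: "int poly set" where
  "VZ = {[:B, A, t, 1:] | t A B. t \<in> {-1, 0, 1}}"

definition disc3 :: "int poly \<Rightarrow> int" where
  "disc3 f = (let a = coeff f 2; b = coeff f 1; c = coeff f 0 in
     a^2 * b^2 - 4 * b^3 - 4 * a^3 * c - 27 * c^2 + 18 * a * b * c)"

definition hgt :: "int poly \<Rightarrow> real" where
  "hgt f = Max {cmod z | z. poly (map_poly of_int f) z = 0}"

text \<open>An element of Q[x]/(f), represented by g in Q[x], is integral iff it satisfies
  a monic integer polynomial in Q[x]/(f).\<close>
definition integral_mod :: "int poly \<Rightarrow> rat poly \<Rightarrow> bool" where
  "integral_mod f g \<longleftrightarrow>
     (\<exists>p :: int poly. lead_coeff p = 1 \<and>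
        map_poly of_int f dvd pcompose (map_poly of_int p) g)"

text \<open>ind(f) = [O : Z[x]/(f)], where O is the ring of integral elements of Q[x]/(f).
  Identifying Q[x]/(f) with Q^3 via the basis 1, x, x^2, Z[x]/(f) is Z^3, so the index
  equals the number of integral elements with all coordinates in [0,1).\<close>
definition ind :: "int poly \<Rightarrow> nat" where
  "ind f = card {g :: rat poly. degree g < 3 \<and> (\<forall>i. 0 \<le> coeff g i \<and> coeff g i < 1)
                   \<and> integral_mod f g}"

definition Sigma_red :: "nat \<Rightarrow> int poly set" where
  "Sigma_red n = {f \<in> VZ. disc3 f \<noteq> 0 \<and> n dvd ind f \<and>
                    \<not> irreducible (map_poly (of_int :: int \<Rightarrow> rat) f)}"

end

theory Submission
  imports Defs "Jordan_Normal_Form.Char_Poly" "HOL-Algebra.Sylow" "HOL-Algebra.Multiplicative_Group"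
begin

no_notation fps_nth (infixl "$" 75)
hide_const (open) UnivPoly.coeff UnivPoly.monom Module.smult



lemma det_trick:
  fixes e :: "'i \<Rightarrow> complex" and z :: complex
  assumes fin: "finite I" and nz: "i0 \<in> I" "e i0 \<noteq> 0"
    and cl: "\<forall>i\<in>I. \<exists>c::'i \<Rightarrow> int. z * e i = (\<Sum>j\<in>I. of_int (c j) * e j)"
  shows "algebraic_int z"
proof -
  define N where "N = card I"
  obtain h where h: "bij_betw h {0..<N} I" using ex_bij_betw_nat_finite[OF fin] N_def by blast
  define C where "C = (\<lambda>i. SOME c::'i \<Rightarrow> int. z * e i = (\<Sum>j\<in>I. of_int (c j) * e j))"
  have C: "z * e i = (\<Sum>j\<in>I. of_int (C i j) * e j)" if "i \<in> I" for i
  proof -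
    from cl that obtain c::"'i \<Rightarrow> int" where "z * e i = (\<Sum>j\<in>I. of_int (c j) * e j)" by blast
    thus ?thesis unfolding C_def by (rule someI[where P="\<lambda>c. z * e i = (\<Sum>j\<in>I. of_int (c j) * e j)"])
  qed
  define A :: "int mat" where "A = mat N N (\<lambda>(r,s). C (h r) (h s))"
  define v :: "complex vec" where "v = vec N (\<lambda>r. e (h r))"
  have Ac: "A \<in> carrier_mat N N" unfolding A_def by simp
  have A'c: "map_mat of_int A \<in> carrier_mat N N" using Ac by simp
  have hin: "h r \<in> I" if "r < N" for r using h that by (auto simp: bij_betw_def)
  have "map_mat of_int A *\<^sub>v v = z \<cdot>\<^sub>v v"
  proof (rule eq_vecI)
    fix r assume r: "r < dim_vec (z \<cdot>\<^sub>v v)"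
    hence r': "r < N" by (simp add: v_def)
    have "(map_mat of_int A *\<^sub>v v) $ r = (\<Sum>s<N. of_int (C (h r) (h s)) * e (h s))"
      using r' by (simp add: A_def v_def mult_mat_vec_def scalar_prod_def atLeast0LessThan)
    also have "\<dots> = (\<Sum>j\<in>I. of_int (C (h r) j) * e j)"
      using sum.reindex_bij_betw[OF h, of "\<lambda>j. of_int (C (h r) j) * e j"] by (simp add: atLeast0LessThan)
    also have "\<dots> = z * e (h r)" using C[OF hin[OF r']] by simp
    finally show "(map_mat of_int A *\<^sub>v v) $ r = (z \<cdot>\<^sub>v v) $ r" using r' by (simp add: v_def)
  qed (simp add: v_def A_def)
  moreover have "v \<noteq> 0\<^sub>v N"
  proof
    assume "v = 0\<^sub>v N"
    obtain r where "r < N" "h r = i0" using h nz(1) by (force simp: bij_betw_def)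
    hence "v $ r = e i0" by (simp add: v_def)
    with \<open>v = 0\<^sub>v N\<close> \<open>r < N\<close> nz(2) show False by simp
  qed
  moreover have "v \<in> carrier_vec N" by (simp add: v_def)
  ultimately have "eigenvalue (map_mat of_int A) z"
    unfolding eigenvalue_def eigenvector_def using A'c by auto
  hence "poly (char_poly (map_mat of_int A)) z = 0"
    using eigenvalue_root_char_poly[OF A'c, of z] by blast
  hence "poly (map_poly of_int (char_poly A)) z = 0"
    using of_int_hom.char_poly_hom[OF Ac] by metis
  moreover have "lead_coeff (char_poly A) = 1" using degree_monic_char_poly[OF Ac] by simp
  ultimately show ?thesis using algebraic_int_altdef_ipoly by blast
qed

definition zspan :: "'i set \<Rightarrow> ('i \<Rightarrow> complex) \<Rightarrow> complex set" where
  "zspan I e = {(\<Sum>j\<in>I. of_int (c j) * e j) | c. True}"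

lemma zspanI: "v = (\<Sum>j\<in>I. of_int (c j) * e j) \<Longrightarrow> v \<in> zspan I e"
  unfolding zspan_def by blast

lemma zspan_add: "u \<in> zspan I e \<Longrightarrow> v \<in> zspan I e \<Longrightarrow> u + v \<in> zspan I e"
proof -
  assume "u \<in> zspan I e" "v \<in> zspan I e"
  then obtain c d where "u = (\<Sum>j\<in>I. of_int (c j) * e j)" "v = (\<Sum>j\<in>I. of_int (d j) * e j)"
    unfolding zspan_def by blast
  hence "u + v = (\<Sum>j\<in>I. of_int (c j + d j) * e j)" by (simp add: sum.distrib algebra_simps)
  thus ?thesis by (rule zspanI)
qed

lemma zspan_0: "0 \<in> zspan I e"
  unfolding zspan_def by (rule CollectI, rule exI[of _ "\<lambda>_. 0"]) simp

lemma zspan_smult: "u \<in> zspan I e \<Longrightarrow> of_int k * u \<in> zspan I e"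
proof -
  assume "u \<in> zspan I e"
  then obtain c where "u = (\<Sum>j\<in>I. of_int (c j) * e j)" unfolding zspan_def by blast
  hence "of_int k * u = (\<Sum>j\<in>I. of_int (k * c j) * e j)" by (simp add: sum_distrib_left algebra_simps)
  thus ?thesis by (rule zspanI)
qed

lemma zspan_basis: assumes "finite I" "i \<in> I" shows "e i \<in> zspan I e"
proof -
  have "(\<Sum>j\<in>I. of_int (if j = i then 1 else 0) * e j) = (\<Sum>j\<in>I. if j = i then e j else 0)"
    by (rule sum.cong) auto
  also have "\<dots> = e i" using assms by simp
  finally show ?thesis by (intro zspanI) (rule sym)
qed

lemma zspan_sum: assumes "finite A" "\<forall>a\<in>A. f a \<in> zspan I e" shows "sum f A \<in> zspan I e"
  using assms by (induction A rule: finite_induct) (auto intro: zspan_add zspan_0)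

lemma algint_pow_span:
  fixes x :: complex
  assumes "algebraic_int x"
  obtains m where "m > 0" "\<And>a. x ^ a \<in> zspan {..<m} (\<lambda>i. x ^ i)"
proof -
  obtain P where P: "poly (map_poly of_int P) x = 0" "lead_coeff P = 1"
    using assms algebraic_int_altdef_ipoly by blast
  define m where "m = degree P"
  have "m > 0"
  proof (rule ccontr)
    assume "\<not> m > 0"
    hence "degree P = 0" by (simp add: m_def)
    hence "P = [:1:]" using P(2) degree_0_id[of P] by simp
    thus False using P(1) by simp
  qed
  let ?S = "zspan {..<m} (\<lambda>i. x ^ i)"
  have pm: "x ^ m \<in> ?S"
  proof -
    have "poly (map_poly of_int P) x = (\<Sum>i\<le>m. of_int (coeff P i) * x ^ i)"
      by (simp add: poly_altdef m_def degree_map_poly coeff_map_poly)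
    also have "\<dots> = (\<Sum>i<m. of_int (coeff P i) * x ^ i) + x ^ m"
      using P(2) by (simp add: m_def lessThan_Suc_atMost[symmetric])
    finally have "x ^ m = (\<Sum>i<m. of_int (- coeff P i) * x ^ i)" using P(1)
      by (simp add: sum_negf eq_neg_iff_add_eq_0 add.commute)
    thus ?thesis by (rule zspanI)
  qed
  have step: "x * u \<in> ?S" if "u \<in> ?S" for u
  proof -
    obtain c where u: "u = (\<Sum>i<m. of_int (c i) * x ^ i)" using \<open>u \<in> ?S\<close> unfolding zspan_def by blast
    have "x * u = (\<Sum>i<m. of_int (c i) * x ^ Suc i)" unfolding u by (simp add: sum_distrib_left algebra_simps)
    also have "\<dots> \<in> ?S"
    proof (rule zspan_sum, simp, intro ballI zspan_smult)
      fix i assume "i \<in> {..<m}"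
      show "x ^ Suc i \<in> ?S"
      proof (cases "Suc i < m")
        case True thus ?thesis by (intro zspan_basis) auto
      next
        case False hence "Suc i = m" using \<open>i \<in> {..<m}\<close> by auto
        thus ?thesis using pm by simp
      qed
    qed
    finally show ?thesis .
  qed
  have "x ^ a \<in> ?S" for a
  proof (induction a)
    case 0 thus ?case using \<open>m > 0\<close> zspan_basis[of "{..<m}" 0 "\<lambda>i. x ^ i"] by simp
  next
    case (Suc a) thus ?case using step by simp
  qed
  thus ?thesis using that \<open>m > 0\<close> by blast
qed

lemma algint_closed:
  fixes x y :: complex
  assumes x: "algebraic_int x" and y: "algebraic_int y"
  shows "algebraic_int (x + y)" and "algebraic_int (x * y)"
proof -
  obtain m where m: "m > 0" "\<And>a. x ^ a \<in> zspan {..<m} (\<lambda>i. x ^ i)"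
    using algint_pow_span[OF x] by blast
  obtain k where k: "k > 0" "\<And>a. y ^ a \<in> zspan {..<k} (\<lambda>i. y ^ i)"
    using algint_pow_span[OF y] by blast
  define I where "I = {..<m} \<times> {..<k}"
  define e where "e = (\<lambda>(i,j). x ^ i * y ^ j)"
  have fin: "finite I" by (simp add: I_def)
  have mem: "x ^ a * y ^ b \<in> zspan I e" for a b
  proof -
    obtain c where c: "x ^ a = (\<Sum>i<m. of_int (c i) * x ^ i)" using m(2)[of a] unfolding zspan_def by blast
    obtain d where d: "y ^ b = (\<Sum>j<k. of_int (d j) * y ^ j)" using k(2)[of b] unfolding zspan_def by blast
    have "x ^ a * y ^ b = (\<Sum>i<m. \<Sum>j<k. of_int (c i * d j) * e (i,j))"
      unfolding c d e_def by (simp add: sum_product algebra_simps)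
    also have "\<dots> \<in> zspan I e"
      by (intro zspan_sum ballI zspan_smult zspan_basis) (auto simp: I_def)
    finally show ?thesis .
  qed
  have i0: "(0,0) \<in> I" "e (0,0) \<noteq> 0" using m(1) k(1) by (auto simp: I_def e_def)
  show "algebraic_int (x + y)"
  proof (rule det_trick[of I "(0,0)" e, OF fin i0])
    show "\<forall>i\<in>I. \<exists>c. (x + y) * e i = (\<Sum>j\<in>I. of_int (c j) * e j)"
    proof
      fix i assume "i \<in> I"
      obtain a b where ab: "i = (a,b)" by force
      have "(x + y) * e i = x ^ Suc a * y ^ b + x ^ a * y ^ Suc b" by (simp add: ab e_def algebra_simps)
      also have "\<dots> \<in> zspan I e" by (intro zspan_add mem)
      finally show "\<exists>c. (x + y) * e i = (\<Sum>j\<in>I. of_int (c j) * e j)" unfolding zspan_def by blast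
    qed
  qed
  show "algebraic_int (x * y)"
  proof (rule det_trick[of I "(0,0)" e, OF fin i0])
    show "\<forall>i\<in>I. \<exists>c. (x * y) * e i = (\<Sum>j\<in>I. of_int (c j) * e j)"
    proof
      fix i assume "i \<in> I"
      obtain a b where ab: "i = (a,b)" by force
      have "(x * y) * e i = x ^ Suc a * y ^ Suc b" by (simp add: ab e_def algebra_simps)
      also have "\<dots> \<in> zspan I e" by (intro mem)
      finally show "\<exists>c. (x * y) * e i = (\<Sum>j\<in>I. of_int (c j) * e j)" unfolding zspan_def by blast
    qed
  qed
qed

lemma algint_poly:
  fixes x :: complex
  assumes "algebraic_int x"
  shows "algebraic_int (poly (map_poly of_int p) x)"
proof (induction p)
  case (pCons a p)
  have "poly (map_poly of_int (pCons a p)) x = of_int a + x * poly (map_poly of_int p) x"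
    by (cases "a = 0 \<and> p = 0") (auto simp: map_poly_pCons)
  thus ?case using pCons.IH assms algint_closed by auto
qed simp




interpretation of_rat_poly_hom: map_poly_comm_semiring_hom of_rat ..

abbreviation Rc :: "rat poly \<Rightarrow> complex poly" where "Rc g \<equiv> map_poly of_rat g"

lemma Rc_of_int: "Rc (map_poly of_int P) = map_poly of_int P"
  by (simp add: map_poly_map_poly o_def)

locale cub =
  fixes f :: "int poly" and a1 a2 a3 :: complex
  assumes fac: "map_poly of_int f = [:-a1,1:] * [:-a2,1:] * [:-a3,1:]"
    and d12: "a1 \<noteq> a2" and d13: "a1 \<noteq> a3" and d23: "a2 \<noteq> a3"
begin

definition good :: "rat poly \<Rightarrow> bool" where
  "good g \<longleftrightarrow> (\<forall>a\<in>{a1,a2,a3}. algebraic_int (poly (Rc g) a))"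

lemma polyF: "poly (map_poly of_int f) a = (a - a1) * (a - a2) * (a - a3)"
  by (simp only: fac poly_mult) (simp add: algebra_simps)

lemma roots: "a \<in> {a1,a2,a3} \<Longrightarrow> poly (map_poly of_int f) a = 0"
  using polyF by auto

lemma degF: "degree (map_poly (of_int :: int \<Rightarrow> complex) f) = 3"
  unfolding fac by (simp add: degree_mult_eq)

lemma lcF: "lead_coeff (map_poly (of_int :: int \<Rightarrow> complex) f) = 1"
  unfolding fac by (simp add: lead_coeff_mult)

lemma degf: "degree f = 3" using degF by simp
lemma lcf: "lead_coeff f = 1" using lcF degF by (simp add: coeff_map_poly degf)

lemma algint_roots: "a \<in> {a1,a2,a3} \<Longrightarrow> algebraic_int a"
  using roots lcf algebraic_int_altdef_ipoly by blast

lemma IM1: assumes "integral_mod f g" shows "good g"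
proof -
  obtain P :: "int poly" where P: "lead_coeff P = 1" "map_poly of_int f dvd pcompose (map_poly of_int P) g"
    using assms unfolding integral_mod_def by blast
  then obtain h where h: "pcompose (map_poly of_int P) g = map_poly of_int f * h" by (auto elim: dvdE)
  have "Rc (pcompose (map_poly of_int P) g) = Rc (map_poly of_int f * h)" using h by simp
  hence eq: "pcompose (map_poly of_int P) (Rc g) = map_poly of_int f * Rc h"
    by (simp add: of_rat_hom.map_poly_pcompose of_rat_poly_hom.hom_mult Rc_of_int)
  show ?thesis unfolding good_def
  proof
    fix a assume a: "a \<in> {a1,a2,a3}"
    have "poly (map_poly of_int P) (poly (Rc g) a) = 0"
      using arg_cong[OF eq, of "\<lambda>p. poly p a"] roots[OF a] by (simp add: poly_pcompose)
    thus "algebraic_int (poly (Rc g) a)" using P(1) algebraic_int_altdef_ipoly by blast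
  qed
qed

lemma IM2: assumes "good g" shows "integral_mod f g"
proof -
  have "\<forall>a\<in>{a1,a2,a3}. \<exists>P::int poly. poly (map_poly of_int P) (poly (Rc g) a) = 0 \<and> lead_coeff P = 1"
    using assms unfolding good_def algebraic_int_altdef_ipoly by blast
  then obtain P1 P2 P3 :: "int poly" where
    P1: "poly (map_poly of_int P1) (poly (Rc g) a1) = 0" "lead_coeff P1 = 1" and
    P2: "poly (map_poly of_int P2) (poly (Rc g) a2) = 0" "lead_coeff P2 = 1" and
    P3: "poly (map_poly of_int P3) (poly (Rc g) a3) = 0" "lead_coeff P3 = 1" by auto
  define P where "P = P1 * P2 * P3"
  have lcP: "lead_coeff P = 1" unfolding P_def by (simp add: lead_coeff_mult P1 P2 P3)
  define H where "H = pcompose (map_poly (of_int :: int \<Rightarrow> rat) P) g"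
  define fQ where "fQ = map_poly (of_int :: int \<Rightarrow> rat) f"
  have fQC: "Rc fQ = map_poly of_int f" unfolding fQ_def by (rule Rc_of_int)
  have HC: "Rc H = pcompose (map_poly of_int P) (Rc g)"
    unfolding H_def by (simp add: of_rat_hom.map_poly_pcompose Rc_of_int)
  have Hroot: "poly (Rc H) a = 0" if "a \<in> {a1,a2,a3}" for a
    using that P1 P2 P3 unfolding HC P_def by (auto simp: poly_pcompose of_int_poly_hom.hom_mult)
  define R where "R = H mod fQ"
  have RC: "Rc R = Rc H mod map_poly of_int f" unfolding R_def by (simp add: of_rat_hom.map_poly_mod fQC)
  have F0: "map_poly (of_int :: int \<Rightarrow> complex) f \<noteq> 0" using degF by auto
  have Rroot: "poly (Rc R) a = 0" if "a \<in> {a1,a2,a3}" for a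
  proof -
    have "Rc H = map_poly of_int f * (Rc H div map_poly of_int f) + Rc H mod map_poly of_int f"
      by simp
    hence "poly (Rc H) a = poly (map_poly of_int f) a * poly (Rc H div map_poly of_int f) a + poly (Rc R) a"
      by (metis RC poly_add poly_mult)
    thus ?thesis using Hroot[OF that] roots[OF that] by simp
  qed
  have "Rc R = 0"
  proof (rule ccontr)
    assume nz: "Rc R \<noteq> 0"
    hence "degree (Rc R) < 3" using degree_mod_less'[OF F0, of "Rc H"] RC degF by simp
    moreover have "{a1,a2,a3} \<subseteq> {x. poly (Rc R) x = 0}" using Rroot by auto
    hence "card {a1,a2,a3} \<le> card {x. poly (Rc R) x = 0}"
      using poly_roots_finite[OF nz] by (intro card_mono) auto
    hence "3 \<le> card {x. poly (Rc R) x = 0}" using d12 d13 d23 by simp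
    ultimately show False using card_poly_roots_bound[OF nz] by simp
  qed
  hence "R = 0" by simp
  hence "fQ dvd H" unfolding R_def by (simp add: mod_eq_0_iff_dvd)
  thus ?thesis unfolding integral_mod_def fQ_def H_def using lcP by blast
qed

lemma IM_iff: "integral_mod f g \<longleftrightarrow> good g" using IM1 IM2 by blast

end



lemma hankel_adj:
  fixes h0 h1 h2 h3 h4 c0 c1 c2 q0 q1 q2 :: "'a::comm_ring_1"
  assumes "q0 = h0*c0 + h1*c1 + h2*c2" "q1 = h1*c0 + h2*c1 + h3*c2" "q2 = h2*c0 + h3*c1 + h4*c2"
  defines "D \<equiv> h0*(h2*h4 - h3*h3) - h1*(h1*h4 - h2*h3) + h2*(h1*h3 - h2*h2)"
  shows "D * c0 = (h2*h4 - h3*h3)*q0 + (h2*h3 - h1*h4)*q1 + (h1*h3 - h2*h2)*q2"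
    and "D * c1 = (h2*h3 - h1*h4)*q0 + (h0*h4 - h2*h2)*q1 + (h1*h2 - h0*h3)*q2"
    and "D * c2 = (h1*h3 - h2*h2)*q0 + (h1*h2 - h0*h3)*q1 + (h0*h2 - h1*h1)*q2"
  unfolding assms by (simp_all add: algebra_simps)

context cub
begin

definition ca where "ca = coeff f 2"
definition cb where "cb = coeff f 1"
definition cc where "cc = coeff f 0"

lemma vieta: "of_int ca = -(a1+a2+a3)" "of_int cb = a1*a2+a1*a3+a2*a3" "of_int cc = -(a1*a2*a3)"
proof -
  have "\<And>i. of_int (coeff f i) = coeff ([:-a1,1:] * [:-a2,1:] * [:-a3,1:]) i"
    using fac by (metis coeff_map_poly of_int_0)
  from this[of 2] this[of 1] this[of 0] show
    "of_int ca = -(a1+a2+a3)" "of_int cb = a1*a2+a1*a3+a2*a3" "of_int cc = -(a1*a2*a3)"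
    by (simp_all add: ca_def cb_def cc_def algebra_simps numeral_2_eq_2)
qed

definition PS :: "nat \<Rightarrow> int" where
  "PS k = (if k = 0 then 3 else if k = 1 then -ca else if k = 2 then ca^2 - 2*cb
     else if k = 3 then 3*ca*cb - 3*cc - ca^3 else ca^4 - 4*ca^2*cb + 2*cb^2 + 4*ca*cc)"

lemma PS: "k \<le> 4 \<Longrightarrow> of_int (PS k) = a1^k + a2^k + a3^k"
proof -
  assume "k \<le> 4"
  hence "k = 0 \<or> k = 1 \<or> k = 2 \<or> k = 3 \<or> k = 4" by auto
  moreover have "of_int (PS 0) = a1^0 + a2^0 + a3^0" by (simp add: PS_def)
  moreover have "of_int (PS 1) = a1^1 + a2^1 + a3^1" by (simp add: PS_def vieta)
  moreover have "of_int (PS 2) = a1^2 + a2^2 + a3^2"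
    by (simp add: PS_def vieta) (simp add: algebra_simps power2_eq_square)
  moreover have "of_int (PS 3) = a1^3 + a2^3 + a3^3"
    by (simp add: PS_def vieta) (simp add: algebra_simps power2_eq_square power3_eq_cube)
  moreover have "of_int (PS 4) = a1^4 + a2^4 + a3^4"
    by (simp add: PS_def vieta) (simp add: algebra_simps power2_eq_square power3_eq_cube power4_eq_xxxx)
  ultimately show ?thesis by blast
qed

lemma det_disc: "PS 0 * (PS 2 * PS 4 - PS 3 * PS 3) - PS 1 * (PS 1 * PS 4 - PS 2 * PS 3)
   + PS 2 * (PS 1 * PS 3 - PS 2 * PS 2) = disc3 f"
  by (simp add: PS_def disc3_def Let_def ca_def cb_def cc_def algebra_simps power2_eq_square power3_eq_cube power4_eq_xxxx)

lemma poly3: assumes "degree g < 3" shows "g = [:coeff g 0, coeff g 1, coeff g 2:]"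
proof (rule poly_eqI)
  fix i show "coeff g i = coeff [:coeff g 0, coeff g 1, coeff g 2:] i"
  proof (cases "i < 3")
    case True hence "i = 0 \<or> i = 1 \<or> i = 2" by auto
    thus ?thesis by (auto simp: numeral_2_eq_2)
  next
    case False thus ?thesis using assms by (auto simp: coeff_eq_0 coeff_pCons split: nat.splits)
  qed
qed

lemma trace_int:
  assumes deg: "degree g < 3" and gd: "good g" and k: "k \<le> 2"
  shows "coeff g 0 * of_int (PS k) + coeff g 1 * of_int (PS (k+1)) + coeff g 2 * of_int (PS (k+2)) \<in> \<int>"
proof -
  define q where "q = coeff g 0 * of_int (PS k) + coeff g 1 * of_int (PS (k+1)) + coeff g 2 * of_int (PS (k+2))"
  have pg: "poly (Rc g) x = of_rat (coeff g 0) + of_rat (coeff g 1) * x + of_rat (coeff g 2) * x^2" for x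
    by (subst poly3[OF deg]) (simp add: of_rat_hom.map_poly_pCons_hom algebra_simps power2_eq_square)
  have "(\<Sum>a\<leftarrow>[a1,a2,a3]. poly (Rc g) a * a^k) = of_rat q"
    unfolding q_def using k by (simp add: pg PS of_rat_add of_rat_mult algebra_simps power2_eq_square)
  moreover have "algebraic_int (\<Sum>a\<leftarrow>[a1,a2,a3]. poly (Rc g) a * a^k)"
  proof -
    have ai: "algebraic_int (poly (Rc g) a * a^k)" if "a \<in> {a1,a2,a3}" for a
    proof -
      have "algebraic_int (a^k)" using algint_roots[OF that]
        by (induction k) (auto intro: algint_closed)
      thus ?thesis using gd that unfolding good_def by (auto intro: algint_closed)
    qed
    show ?thesis using ai[of a1] ai[of a2] ai[of a3] by (simp add: algint_closed)
  qed
  ultimately have "(of_rat q :: complex) \<in> \<int>" by (metis Rats_of_rat rational_algebraic_int_is_int)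
  then obtain m where "(of_rat q :: complex) = of_int m" by (auto elim: Ints_cases)
  hence "q = of_int m" by (metis of_rat_eq_iff of_rat_of_int_eq)
  thus ?thesis unfolding q_def by simp
qed

lemma denom:
  assumes deg: "degree g < 3" and gd: "good g"
  shows "of_int (disc3 f) * coeff g j \<in> \<int>"
proof -
  define h where "h = (\<lambda>i. (of_int (PS i) :: rat))"
  define q where "q = (\<lambda>k. coeff g 0 * h k + coeff g 1 * h (k+1) + coeff g 2 * h (k+2))"
  have q: "q k \<in> \<int>" if "k \<le> 2" for k using trace_int[OF deg gd that] by (simp add: q_def h_def)
  have q0: "q 0 = h 0 * coeff g 0 + h 1 * coeff g 1 + h 2 * coeff g 2" by (simp add: q_def algebra_simps eval_nat_numeral)
  have q1: "q 1 = h 1 * coeff g 0 + h 2 * coeff g 1 + h 3 * coeff g 2" by (simp add: q_def algebra_simps eval_nat_numeral)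
  have q2: "q 2 = h 2 * coeff g 0 + h 3 * coeff g 1 + h 4 * coeff g 2" by (simp add: q_def algebra_simps eval_nat_numeral)
  have D: "(of_int (disc3 f) :: rat) = h 0 * (h 2 * h 4 - h 3 * h 3) - h 1 * (h 1 * h 4 - h 2 * h 3) + h 2 * (h 1 * h 3 - h 2 * h 2)"
    unfolding h_def det_disc[symmetric] by simp
  have hI: "h i \<in> \<int>" for i by (simp add: h_def)
  have qI: "q 0 \<in> \<int>" "q 1 \<in> \<int>" "q 2 \<in> \<int>" using q by auto
  note adj = hankel_adj[OF q0 q1 q2, folded D]
  show ?thesis
  proof (cases "j < 3")
    case True hence "j = 0 \<or> j = 1 \<or> j = 2" by auto
    thus ?thesis using adj hI qI
      by (elim disjE) (simp_all add: numeral_2_eq_2[symmetric] Ints_add Ints_mult Ints_diff)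
  next
    case False thus ?thesis using deg by (simp add: coeff_eq_0)
  qed
qed

end



lemma frac_frac_add: "frac (frac a + b) = frac (a + (b::'a::floor_ceiling))"
proof -
  have e: "frac a + b = (a + b) - of_int \<lfloor>a\<rfloor>" by (simp add: frac_def)
  have "frac ((a + b) - of_int \<lfloor>a\<rfloor>) = frac (a + b)" unfolding frac_def by simp
  thus ?thesis unfolding e .
qed

lemma frac_frac_add2: "frac (b + frac a) = frac (b + (a::'a::floor_ceiling))"
  using frac_frac_add[of a b] by (simp add: add.commute)

abbreviation "Fr g \<equiv> map_poly (frac :: rat \<Rightarrow> rat) g"

lemma coeff_Fr: "coeff (Fr g) i = frac (coeff g i)" by (simp add: coeff_map_poly)

abbreviation "GS C \<equiv> \<lparr>carrier = C, mult = (\<lambda>x y. Fr (x + y)), one = (0::rat poly)\<rparr>"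

lemma pow_GS: "x [^]\<^bsub>GS C\<^esub> (k::nat) = Fr (smult (of_nat k) x)"
proof (induction k)
  case 0 show ?case by (simp add: poly_eq_iff coeff_Fr)
next
  case (Suc k)
  have "x [^]\<^bsub>GS C\<^esub> Suc k = Fr (Fr (smult (of_nat k) x) + x)" by (simp add: Suc)
  also have "\<dots> = Fr (smult (of_nat (Suc k)) x)"
    by (simp add: poly_eq_iff coeff_Fr frac_frac_add algebra_simps)
  finally show ?case .
qed

context cub begin

definition SS where "SS = {g :: rat poly. degree g < 3 \<and> (\<forall>i. 0 \<le> coeff g i \<and> coeff g i < 1) \<and> integral_mod f g}"

lemma ind_SS: "ind f = card SS" by (simp add: ind_def SS_def)

lemma good_add: "good x \<Longrightarrow> good y \<Longrightarrow> good (x + y)"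
  unfolding good_def by (auto simp: of_rat_poly_hom.hom_add intro: algint_closed)

lemma Rc_minus: "Rc (- x) = - Rc x" by (simp add: poly_eq_iff coeff_map_poly of_rat_minus)

lemma good_minus: "good x \<Longrightarrow> good (- x)"
  unfolding good_def by (auto simp: Rc_minus)

lemma good_Fr: assumes "good g" shows "good (Fr g)"
proof -
  define F where "F = map_poly (floor :: rat \<Rightarrow> int) g"
  have eq: "Rc (Fr g) = Rc g + - map_poly of_int F"
    by (simp add: poly_eq_iff coeff_map_poly F_def frac_def of_rat_diff)
  show ?thesis unfolding good_def
  proof
    fix a assume a: "a \<in> {a1,a2,a3}"
    have "algebraic_int (poly (map_poly of_int F) a)" by (rule algint_poly[OF algint_roots[OF a]])
    hence "algebraic_int (- poly (map_poly of_int F) a)" by simp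
    moreover have "algebraic_int (poly (Rc g) a)" using assms a unfolding good_def by blast
    ultimately have "algebraic_int (poly (Rc g) a + - poly (map_poly of_int F) a)" by (rule algint_closed(1)[rotated])
    thus "algebraic_int (poly (Rc (Fr g)) a)" unfolding eq by simp
  qed
qed

lemma SS_iff: "g \<in> SS \<longleftrightarrow> degree g < 3 \<and> (\<forall>i. 0 \<le> coeff g i \<and> coeff g i < 1) \<and> good g"
  unfolding SS_def using IM_iff by blast

lemma Fr_in_SS: "degree g < 3 \<Longrightarrow> good g \<Longrightarrow> Fr g \<in> SS"
  unfolding SS_iff using degree_map_poly_le[of frac g]
  by (auto simp: coeff_Fr frac_lt_1 good_Fr)

lemma Fr_id: "g \<in> SS \<Longrightarrow> Fr g = g"
  unfolding SS_iff by (auto simp: poly_eq_iff coeff_Fr frac_eq)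

lemma group_GS: "group (GS SS)"
proof (rule groupI)
  fix x y assume "x \<in> carrier (GS SS)" "y \<in> carrier (GS SS)"
  thus "x \<otimes>\<^bsub>GS SS\<^esub> y \<in> carrier (GS SS)"
    using degree_add_le[of x 2 y] by simp (intro Fr_in_SS good_add, auto simp: SS_iff)
next
  show "\<one>\<^bsub>GS SS\<^esub> \<in> carrier (GS SS)" by (simp add: SS_iff good_def)
next
  fix x y z assume "x \<in> carrier (GS SS)" "y \<in> carrier (GS SS)" "z \<in> carrier (GS SS)"
  show "x \<otimes>\<^bsub>GS SS\<^esub> y \<otimes>\<^bsub>GS SS\<^esub> z = x \<otimes>\<^bsub>GS SS\<^esub> (y \<otimes>\<^bsub>GS SS\<^esub> z)"
    by (simp add: poly_eq_iff coeff_Fr frac_frac_add frac_frac_add2 add_ac)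
next
  fix x assume "x \<in> carrier (GS SS)"
  thus "\<one>\<^bsub>GS SS\<^esub> \<otimes>\<^bsub>GS SS\<^esub> x = x" by (simp add: Fr_id)
next
  fix x assume x: "x \<in> carrier (GS SS)"
  hence "Fr (- x) \<in> SS" by (intro Fr_in_SS good_minus) (auto simp: SS_iff)
  moreover have "Fr (Fr (- x) + x) = 0" by (simp add: poly_eq_iff coeff_Fr frac_frac_add)
  ultimately show "\<exists>y\<in>carrier (GS SS). y \<otimes>\<^bsub>GS SS\<^esub> x = \<one>\<^bsub>GS SS\<^esub>" by auto
qed

lemma coeff_form:
  assumes g: "g \<in> SS" and d: "disc3 f \<noteq> 0"
  shows "\<exists>k. 0 \<le> k \<and> k < \<bar>disc3 f\<bar> \<and> coeff g j = of_int k / of_int \<bar>disc3 f\<bar>"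
proof -
  have g': "degree g < 3" "good g" "0 \<le> coeff g j" "coeff g j < 1" using g by (auto simp: SS_iff)
  have "of_int (disc3 f) * coeff g j \<in> \<int>" by (rule denom[OF g'(1,2)])
  hence "of_int \<bar>disc3 f\<bar> * coeff g j \<in> \<int>"
    by (cases "disc3 f \<ge> 0") (auto simp: Ints_minus[of "of_int (disc3 f) * coeff g j", simplified])
  then obtain k where k: "of_int \<bar>disc3 f\<bar> * coeff g j = of_int k" by (auto elim: Ints_cases)
  have pos: "(0::rat) < of_int \<bar>disc3 f\<bar>" using d by simp
  have "0 \<le> (of_int k :: rat)" using g'(3) pos k[symmetric] by simp
  moreover have "(of_int k :: rat) < of_int \<bar>disc3 f\<bar>" using g'(4) pos k[symmetric]
    by (metis mult.right_neutral mult_strict_left_mono)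
  moreover have "coeff g j = of_int k / of_int \<bar>disc3 f\<bar>" using k pos by (simp add: field_simps)
  ultimately show ?thesis by (intro exI[of _ k]) simp
qed

lemma finite_SS: assumes d: "disc3 f \<noteq> 0" shows "finite SS"
proof -
  define e where "e = \<bar>disc3 f\<bar>"
  define F where "F = (\<lambda>(k0,k1,k2). [:of_int k0 / of_int e, of_int k1 / of_int e, of_int (k2::int) / (of_int e :: rat):])"
  have "SS \<subseteq> F ` ({0..<e} \<times> {0..<e} \<times> {0..<e})"
  proof
    fix g assume g: "g \<in> SS"
    obtain k0 where k0: "0 \<le> k0 \<and> k0 < e \<and> coeff g 0 = of_int k0 / of_int e" using coeff_form[OF g d] e_def by blast
    obtain k1 where k1: "0 \<le> k1 \<and> k1 < e \<and> coeff g 1 = of_int k1 / of_int e" using coeff_form[OF g d] e_def by blast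
    obtain k2 where k2: "0 \<le> k2 \<and> k2 < e \<and> coeff g 2 = of_int k2 / of_int e" using coeff_form[OF g d] e_def by blast
    have "g = F (k0,k1,k2)" unfolding F_def using poly3[of g] g k0 k1 k2 by (auto simp: SS_iff)
    thus "g \<in> F ` ({0..<e} \<times> {0..<e} \<times> {0..<e})" using k0 k1 k2 by auto
  qed
  thus ?thesis by (rule finite_subset) simp
qed

lemma prime_dvd_ind:
  assumes p: "prime p" and pd: "p dvd ind f" and d: "disc3 f \<noteq> 0"
  shows "int p dvd disc3 f"
proof (rule ccontr)
  assume nd: "\<not> int p dvd disc3 f"
  interpret G: group "GS SS" by (rule group_GS)
  have fin: "finite (carrier (GS SS))" using finite_SS[OF d] by simp
  have "order (GS SS) = p ^ 1 * (card SS div p)" using pd by (simp add: ind_SS order_def)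
  then obtain H where H: "subgroup H (GS SS)" "card H = p ^ 1"
    using sylow_thm[OF p G.is_group _ fin] by blast
  have finH: "finite H" using H(1) fin by (meson finite_subset subgroup.subset)
  have "H \<noteq> {0}" using H(2) p by (auto simp: prime_gt_1_nat)
  moreover have "0 \<in> H" using subgroup.one_closed[OF H(1)] by simp
  ultimately obtain x where x: "x \<in> H" "x \<noteq> 0" by blast
  have xS: "x \<in> SS" using x(1) H(1) by (auto dest: subgroup.mem_carrier)
  interpret H: group "(GS SS)\<lparr>carrier := H\<rparr>" by (rule subgroup.subgroup_is_group[OF H(1) G.is_group])
  have "x [^]\<^bsub>(GS SS)\<lparr>carrier := H\<rparr>\<^esub> order ((GS SS)\<lparr>carrier := H\<rparr>) = \<one>\<^bsub>(GS SS)\<lparr>carrier := H\<rparr>\<^esub>"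
    by (rule H.pow_order_eq_1) (use x in simp)
  hence "x [^]\<^bsub>GS H\<^esub> p = 0" using H(2) by (simp add: order_def)
  hence Fp: "Fr (smult (of_nat p) x) = 0" by (simp add: pow_GS)
  have "coeff x j = 0" for j
  proof -
    have "frac (of_nat p * coeff x j) = 0" using arg_cong[OF Fp, of "\<lambda>q. coeff q j"] by (simp add: coeff_Fr)
    hence i1: "of_nat p * coeff x j \<in> \<int>" by (simp add: frac_eq_0_iff)
    have i2: "of_int (disc3 f) * coeff x j \<in> \<int>" using xS denom by (auto simp: SS_iff)
    have "coprime (int p) (disc3 f)" using nd p by (simp add: prime_imp_coprime_int prime_nat_iff_prime)
    then obtain u v where uv: "u * int p + v * disc3 f = 1" using bezout_int[of "int p" "disc3 f"] by auto
    have "coeff x j = of_int u * (of_nat p * coeff x j) + of_int v * (of_int (disc3 f) * coeff x j)"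
      using arg_cong[OF uv, of "\<lambda>t. (of_int t :: rat) * coeff x j"] by (simp add: algebra_simps)
    moreover have "of_int u * (of_nat p * coeff x j) + of_int v * (of_int (disc3 f) * coeff x j) \<in> \<int>"
      using i1 i2 by (meson Ints_add Ints_mult Ints_of_int)
    ultimately have "coeff x j \<in> \<int>" by simp
    moreover have "0 \<le> coeff x j" "coeff x j < 1" using xS by (auto simp: SS_iff)
    ultimately show ?thesis by (metis frac_eq frac_eq_0_iff)
  qed
  hence "x = 0" by (simp add: poly_eq_iff)
  with x(2) show False by simp
qed

end



lemma sqf_coprime: assumes "squarefree (a * b :: nat)" shows "coprime a b"
proof -
  have "gcd a b * gcd a b dvd a * b" by (intro mult_dvd_mono) auto
  hence "(gcd a b)^2 dvd a * b" by (simp add: power2_eq_square)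
  hence "gcd a b dvd 1" using squarefreeD[OF assms] by blast
  thus ?thesis by (simp add: coprime_iff_gcd_eq_1)
qed

lemma sqf_split:
  assumes "squarefree (n::nat)" "prime p" "p dvd n"
  shows "n = p * (n div p)" "\<not> p dvd (n div p)" "squarefree (n div p)"
proof -
  show e: "n = p * (n div p)" using assms by simp
  have "coprime p (n div p)" using sqf_coprime assms(1) e by metis
  thus "\<not> p dvd (n div p)" using assms(2) by (metis coprime_self not_prime_unit coprime_absorb_left coprime_common_divisor dvd_refl)
  show "squarefree (n div p)" using squarefree_multD(2)[of p "n div p"] assms(1) e by simp
qed

lemma sqf_dvd_all_primes:
  fixes n :: nat and m :: int
  assumes "squarefree n" "n > 0" "\<And>p. prime p \<Longrightarrow> p dvd n \<Longrightarrow> int p dvd m"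
  shows "int n dvd m"
  using assms
proof (induction n rule: less_induct)
  case (less n)
  show ?case
  proof (cases "n = 1")
    case True thus ?thesis by simp
  next
    case False
    then obtain p where p: "prime p" "p dvd n" using prime_factor_nat by blast
    note sp = sqf_split[OF less.prems(1) p(1) p(2)]
    define k where "k = n div p"
    have kpos: "k > 0" using less.prems(2) sp(1) k_def by (metis gr0I mult_0_right)
    have "k < n" using n_less_m_mult_n[OF kpos, of p] prime_gt_1_nat[OF p(1)] sp(1) k_def by simp
    have "int k dvd m"
    proof (rule less.IH[OF \<open>k < n\<close>])
      show "squarefree k" using sp(3) k_def by simp
      show "0 < k" by fact
      fix q assume "prime q" "q dvd k"
      moreover have "q dvd n" by (metis \<open>q dvd k\<close> k_def sp(1) dvd_mult)
      ultimately show "int q dvd m" using less.prems(3) by blast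
    qed
    moreover have "int p dvd m" using less.prems(3)[OF p] .
    moreover have "coprime (int p) (int k)" using sp(2) p(1) k_def
      by (simp add: prime_imp_coprime_nat)
    ultimately have "int p * int k dvd m" by (intro divides_mult)
    thus ?thesis using sp(1) k_def by (metis of_nat_mult)
  qed
qed

lemma divisors_split:
  fixes p k :: nat
  assumes "prime p" "\<not> p dvd k"
  shows "{a. a dvd p * k} = {a. a dvd k} \<union> (\<lambda>a. p * a) ` {a. a dvd k}"
    and "{a. a dvd k} \<inter> (\<lambda>a. p * a) ` {a. a dvd k} = {}"
proof -
  show "{a. a dvd p * k} = {a. a dvd k} \<union> (\<lambda>a. p * a) ` {a. a dvd k}"
  proof (intro equalityI subsetI)
    fix a assume "a \<in> {a. a dvd p * k}"
    hence a: "a dvd p * k" by simp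
    show "a \<in> {a. a dvd k} \<union> (\<lambda>a. p * a) ` {a. a dvd k}"
    proof (cases "p dvd a")
      case True
      then obtain b where b: "a = p * b" by blast
      hence "b dvd k" using a assms(1) by (auto simp: nat_mult_dvd_cancel_disj)
      thus ?thesis using b by blast
    next
      case False
      hence "coprime a p" using prime_imp_coprime_nat[OF assms(1)] by (simp add: coprime_commute)
      hence "a dvd k" using a by (metis coprime_dvd_mult_right_iff)
      thus ?thesis by blast
    qed
  qed auto
  show "{a. a dvd k} \<inter> (\<lambda>a. p * a) ` {a. a dvd k} = {}"
    using assms(2) by (auto dest: dvd_mult_left)
qed

lemma divisor_bound_aux:
  fixes eps :: real and N0 :: nat
  assumes eps: "eps > 0" and N0: "2 powr (1/eps) \<le> real N0"
  shows "squarefree n \<Longrightarrow> n > 0 \<Longrightarrow>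
    real (card {a. a dvd n}) \<le> 2 ^ card {p. prime p \<and> p dvd n \<and> p < N0} * real n powr eps"
proof (induction n rule: less_induct)
  case (less n)
  show ?case
  proof (cases "n = 1")
    case True thus ?thesis by simp
  next
    case False
    then obtain p where p: "prime p" "p dvd n" using prime_factor_nat by blast
    note sp = sqf_split[OF less.prems(1) p(1) p(2)]
    define k where "k = n div p"
    have nk: "n = p * k" using sp(1) k_def by simp
    have kpos: "k > 0" using less.prems(2) nk by (metis gr0I mult_0_right)
    have "k < n" using n_less_m_mult_n[OF kpos, of p] prime_gt_1_nat[OF p(1)] nk by simp
    have pk: "\<not> p dvd k" using sp(2) k_def by simp
    have IH: "real (card {a. a dvd k}) \<le> 2 ^ card {q. prime q \<and> q dvd k \<and> q < N0} * real k powr eps"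
      using less.IH[OF \<open>k < n\<close>] sp(3) kpos k_def by simp
    have fin: "finite {a. a dvd k}" using kpos by (simp add: finite_divisors_nat)
    have "card {a. a dvd n} = card {a. a dvd k} + card ((\<lambda>a. p * a) ` {a. a dvd k})"
      unfolding nk divisors_split(1)[OF p(1) pk] using divisors_split(2)[OF p(1) pk] fin
      by (intro card_Un_disjoint) auto
    also have "card ((\<lambda>a. p * a) ` {a. a dvd k}) = card {a. a dvd k}"
      using p(1) by (intro card_image) (auto simp: inj_on_def prime_gt_0_nat)
    finally have cn: "real (card {a. a dvd n}) = 2 * real (card {a. a dvd k})" by simp
    define s where "s = card {q. prime q \<and> q dvd k \<and> q < N0}"
    have finS: "finite {q. prime q \<and> q dvd k \<and> q < N0}" by simp
    have setn: "{q. prime q \<and> q dvd n \<and> q < N0} = {q. prime q \<and> q dvd k \<and> q < N0} \<union> (if p < N0 then {p} else {})"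
    proof (intro equalityI subsetI)
      fix q assume "q \<in> {q. prime q \<and> q dvd n \<and> q < N0}"
      hence q: "prime q" "q dvd p * k" "q < N0" using nk by auto
      hence "q dvd p \<or> q dvd k" by (simp add: prime_dvd_mult_iff)
      hence "q = p \<or> q dvd k" using q(1) p(1) by (metis primes_dvd_imp_eq)
      thus "q \<in> {q. prime q \<and> q dvd k \<and> q < N0} \<union> (if p < N0 then {p} else {})" using q by auto
    next
      fix q assume "q \<in> {q. prime q \<and> q dvd k \<and> q < N0} \<union> (if p < N0 then {p} else {})"
      thus "q \<in> {q. prime q \<and> q dvd n \<and> q < N0}" using p nk by (auto split: if_splits)
    qed
    have npow: "real n powr eps = real p powr eps * real k powr eps"
      using nk by (simp add: powr_mult)
    have kle: "real k powr eps \<le> real n powr eps" using \<open>k < n\<close> eps kpos by (intro powr_mono2) auto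
    show ?thesis
    proof (cases "p < N0")
      case True
      have "card {q. prime q \<and> q dvd n \<and> q < N0} = s + 1"
        unfolding setn s_def using True pk finS by (simp add: card_insert_if)
      hence "2 ^ card {q. prime q \<and> q dvd n \<and> q < N0} * real n powr eps = 2 * (2 ^ s * real n powr eps)" by simp
      moreover have "2 * real (card {a. a dvd k}) \<le> 2 * (2 ^ s * real n powr eps)"
        using IH kle unfolding s_def by (smt (verit) mult_left_mono zero_le_power)
      ultimately show ?thesis using cn less.prems(2) by simp
    next
      case False
      have "card {q. prime q \<and> q dvd n \<and> q < N0} = s" unfolding setn s_def using False by simp
      have "2 \<le> real p powr eps"
      proof -
        have "2 = (2 powr (1/eps)) powr eps" using eps by (simp add: powr_powr)
        also have "\<dots> \<le> real p powr eps" using N0 False eps by (intro powr_mono2) auto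
        finally show ?thesis .
      qed
      hence "2 * (2 ^ s * real k powr eps) \<le> real p powr eps * (2 ^ s * real k powr eps)"
        by (intro mult_right_mono) auto
      hence "2 * real (card {a. a dvd k}) \<le> 2 ^ s * real n powr eps"
        using IH unfolding s_def npow by (smt (verit) mult.left_commute)
      thus ?thesis using cn \<open>card {q. prime q \<and> q dvd n \<and> q < N0} = s\<close> by simp
    qed
  qed
qed

lemma divisor_bound:
  fixes eps :: real
  assumes eps: "eps > 0"
  shows "\<exists>K>0. \<forall>n. squarefree n \<longrightarrow> n > 0 \<longrightarrow> real (card {a. a dvd n}) \<le> K * real n powr eps"
proof -
  define N0 where "N0 = nat \<lceil>2 powr (1/eps)\<rceil>"
  have N0: "2 powr (1/eps) \<le> real N0" unfolding N0_def by linarith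
  show ?thesis
  proof (intro exI[of _ "2 ^ N0"] conjI allI impI)
    fix n :: nat assume n: "squarefree n" "n > 0"
    have "card {p. prime p \<and> p dvd n \<and> p < N0} \<le> card {..<N0}" by (intro card_mono) auto
    hence "(2::real) ^ card {p. prime p \<and> p dvd n \<and> p < N0} \<le> 2 ^ N0" by (intro power_increasing) auto
    hence "2 ^ card {p. prime p \<and> p dvd n \<and> p < N0} * real n powr eps \<le> 2 ^ N0 * real n powr eps"
      by (intro mult_right_mono) auto
    thus "real (card {a. a dvd n}) \<le> 2 ^ N0 * real n powr eps"
      using divisor_bound_aux[OF eps N0 n] by linarith
  qed simp
qed




definition mk :: "int \<Rightarrow> int \<Rightarrow> int \<Rightarrow> int poly" where
  "mk t r u = [:-(r*u), u - r*(t+r), t, 1:]"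

lemma disc_mk: "disc3 (mk t r u) = (2*r^2 + t*r + u)^2 * ((t+r)^2 - 4*u)"
  by (simp add: disc3_def mk_def Let_def eval_nat_numeral algebra_simps)

lemma lin_root: fixes c :: "'a::field poly" assumes "degree c = 1" shows "\<exists>x. poly c x = 0"
proof -
  have c: "c = [:coeff c 0, coeff c 1:]"
    by (rule poly_eqI) (use assms in \<open>auto simp: coeff_pCons coeff_eq_0 split: nat.splits\<close>)
  have "coeff c 1 \<noteq> 0" using assms by (metis leading_coeff_0_iff zero_neq_one degree_0)
  hence "poly c (- coeff c 0 / coeff c 1) = 0" by (subst c) (simp add: field_simps)
  thus ?thesis by blast
qed

lemma VZ_red_mk:
  assumes "f \<in> VZ" "\<not> irreducible (map_poly (of_int :: int \<Rightarrow> rat) f)"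
  shows "\<exists>t r u. t \<in> {-1,0,1} \<and> f = mk t r u"
proof -
  obtain t A B where f: "f = [:B, A, t, 1:]" "t \<in> {-1,0,1}" using assms(1) unfolding VZ_def by blast
  define fQ where "fQ = map_poly (of_int :: int \<Rightarrow> rat) f"
  have dfQ: "degree fQ = 3" unfolding fQ_def f by simp
  have "fQ \<noteq> 0" using dfQ by auto
  moreover have "\<not> fQ dvd 1" using dfQ by (auto simp: is_unit_iff_degree)
  ultimately obtain a b where ab: "fQ = a * b" "\<not> a dvd 1" "\<not> b dvd 1"
    using assms(2) unfolding fQ_def[symmetric] irreducible_def by blast
  have a0: "a \<noteq> 0" "b \<noteq> 0" using ab \<open>fQ \<noteq> 0\<close> by auto
  have da: "degree a \<ge> 1" "degree b \<ge> 1" using ab(2,3) a0 by (auto simp: is_unit_iff_degree)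
  have "degree a + degree b = 3" using ab(1) a0 dfQ by (simp add: degree_mult_eq)
  hence "degree a = 1 \<or> degree b = 1" using da by linarith
  then obtain c where c: "degree c = 1" "c dvd fQ" using ab(1) by auto
  obtain x where "poly c x = 0" using lin_root[OF c(1)] by blast
  hence x: "poly fQ x = 0" using c(2) by (auto elim: dvdE)
  have "algebraic_int x" unfolding algebraic_int_altdef_ipoly using x f unfolding fQ_def by (intro exI[of _ f]) simp
  hence "x \<in> \<int>" by (rule rational_algebraic_int_is_int) (simp add: Rats_def)
  then obtain r where r: "x = of_int r" by (auto elim: Ints_cases)
  have "of_int (poly f r) = poly fQ (of_int r)" unfolding fQ_def by (simp add: of_int_hom.poly_map_poly)
  hence "poly f r = 0" using x r by simp
  hence eq: "B + r * (A + r * (t + r)) = 0" unfolding f by simp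
  define u where "u = A + r * (t + r)"
  have "f = mk t r u" unfolding f mk_def u_def using eq by (simp add: algebra_simps)
  thus ?thesis using f(2) by blast
qed

definition bt1 :: "int \<Rightarrow> int \<Rightarrow> int \<Rightarrow> complex" where
  "bt1 t r u = (- of_int (t + r) + csqrt (of_int ((t+r)^2 - 4*u))) / 2"
definition bt2 :: "int \<Rightarrow> int \<Rightarrow> int \<Rightarrow> complex" where
  "bt2 t r u = (- of_int (t + r) - csqrt (of_int ((t+r)^2 - 4*u))) / 2"

lemma bt_sum: "bt1 t r u + bt2 t r u = - of_int (t + r)"
  by (simp add: bt1_def bt2_def field_simps)

lemma bt_prod: "bt1 t r u * bt2 t r u = of_int u"
proof -
  define w where "w = csqrt (of_int ((t+r)^2 - 4*u))"
  have w2: "w * w = of_int ((t+r)^2 - 4*u)" unfolding w_def by (metis power2_csqrt power2_eq_square)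
  have "bt1 t r u * bt2 t r u = (of_int (t+r) * of_int (t+r) - w * w) / 4"
    unfolding bt1_def bt2_def w_def[symmetric] by (simp add: field_simps)
  also have "\<dots> = of_int u" unfolding w2 by (simp add: power2_eq_square field_simps)
  finally show ?thesis .
qed

lemma quad_gen: "[:-x,1:] * [:-y,1:] = [:x*y, -(x+y), (1::'a::comm_ring_1):]"
  by (simp add: algebra_simps)

lemma quad_fac: "[:-bt1 t r u, 1:] * [:-bt2 t r u, 1:] = [:of_int u, of_int (t + r), 1:]"
  unfolding quad_gen bt_sum bt_prod by simp

lemma mk_fac: "map_poly of_int (mk t r u) = [:- of_int r, 1:] * [:-bt1 t r u, 1:] * [:-bt2 t r u, 1:]"
  unfolding mult.assoc quad_fac by (simp add: mk_def algebra_simps)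

lemma mk_cub:
  assumes "disc3 (mk t r u) \<noteq> 0"
  shows "cub (mk t r u) (of_int r) (bt1 t r u) (bt2 t r u)"
proof -
  have q: "2*r^2 + t*r + u \<noteq> 0" and D: "(t+r)^2 - 4*u \<noteq> 0" using assms by (auto simp: disc_mk)
  have "bt1 t r u \<noteq> bt2 t r u"
  proof
    assume "bt1 t r u = bt2 t r u"
    hence "csqrt (of_int ((t+r)^2 - 4*u)) = 0" by (simp add: bt1_def bt2_def)
    hence "(of_int ((t+r)^2 - 4*u) :: complex) = 0" by simp
    with D show False by (simp only: of_int_eq_0_iff)
  qed
  moreover have "poly ([:-bt1 t r u, 1:] * [:-bt2 t r u, 1:]) (of_int r) \<noteq> 0"
  proof -
    have "poly ([:-bt1 t r u, 1:] * [:-bt2 t r u, 1:]) (of_int r) = of_int (2*r^2 + t*r + u)"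
      unfolding quad_fac by (simp add: algebra_simps power2_eq_square)
    thus ?thesis using q by (metis of_int_eq_0_iff)
  qed
  hence "of_int r \<noteq> bt1 t r u" "of_int r \<noteq> bt2 t r u" by auto
  ultimately show ?thesis by unfold_locales (auto simp: mk_fac)
qed

lemma mk_roots: "{z. poly (map_poly of_int (mk t r u)) z = 0} = {of_int r, bt1 t r u, bt2 t r u}"
  by (simp only: mk_fac poly_mult mult_eq_0_iff) auto

lemma mk_hgt:
  assumes "hgt (mk t r u) < Y"
  shows "real_of_int \<bar>r\<bar> < Y" "real_of_int \<bar>u\<bar> < Y^2"
proof -
  have set: "{cmod z | z. poly (map_poly of_int (mk t r u)) z = 0} = {cmod (of_int r), cmod (bt1 t r u), cmod (bt2 t r u)}"
  proof -
    have "\<And>z. poly (map_poly of_int (mk t r u)) z = 0 \<longleftrightarrow> z \<in> {of_int r, bt1 t r u, bt2 t r u}"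
      using mk_roots[of t r u] by blast
    thus ?thesis by (auto simp del: norm_of_int)
  qed
  have h: "hgt (mk t r u) = Max {cmod (of_int r), cmod (bt1 t r u), cmod (bt2 t r u)}"
    unfolding hgt_def set ..
  have "cmod (of_int r) \<le> hgt (mk t r u)" "cmod (bt1 t r u) \<le> hgt (mk t r u)" "cmod (bt2 t r u) \<le> hgt (mk t r u)"
    unfolding h by (auto intro: Max_ge)
  hence b: "cmod (of_int r) < Y" "cmod (bt1 t r u) < Y" "cmod (bt2 t r u) < Y" using assms by linarith+
  show "real_of_int \<bar>r\<bar> < Y" using b(1) by simp
  have "cmod (of_int u) = cmod (bt1 t r u) * cmod (bt2 t r u)" by (metis bt_prod norm_mult)
  also have "\<dots> < Y * Y" using b(2,3) by (intro mult_strict_mono') auto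
  finally show "real_of_int \<bar>u\<bar> < Y^2" by (simp add: power2_eq_square)
qed




lemma sigma_struct:
  assumes f: "f \<in> Sigma_red n" and n: "n > 0" "squarefree n"
  shows "\<exists>t r u. t \<in> {-1,0,1} \<and> f = mk t r u \<and> disc3 f \<noteq> 0 \<and> int n dvd disc3 f"
proof -
  have f': "f \<in> VZ" "disc3 f \<noteq> 0" "n dvd ind f" "\<not> irreducible (map_poly (of_int :: int \<Rightarrow> rat) f)"
    using f unfolding Sigma_red_def by auto
  obtain t r u where tru: "t \<in> {-1,0,1}" "f = mk t r u" using VZ_red_mk[OF f'(1,4)] by blast
  interpret cub f "of_int r" "bt1 t r u" "bt2 t r u" using mk_cub f'(2) tru(2) by simp
  have "int n dvd disc3 f"
  proof (rule sqf_dvd_all_primes[OF n(2,1)])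
    fix p assume "prime p" "p dvd n"
    thus "int p dvd disc3 f" using prime_dvd_ind f'(2,3) dvd_trans by blast
  qed
  thus ?thesis using tru f'(2) by blast
qed

lemma card_cong_bound:
  fixes U :: "int set" and L :: real and m :: nat
  assumes m: "m > 0" and L: "L \<ge> 0" and bd: "\<forall>u\<in>U. real_of_int \<bar>u\<bar> < L"
    and cg: "\<forall>u\<in>U. \<forall>v\<in>U. int m dvd 4 * (u - v)"
  shows "finite U" "real (card U) \<le> 8 * L / m + 1"
proof -
  have sub: "U \<subseteq> {-\<lceil>L\<rceil>..\<lceil>L\<rceil>}"
  proof
    fix u assume "u \<in> U"
    hence "real_of_int \<bar>u\<bar> < L" using bd by blast
    hence "real_of_int \<bar>u\<bar> \<le> real_of_int \<lceil>L\<rceil>" using le_of_int_ceiling[of L] by linarith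
    hence "\<bar>u\<bar> \<le> \<lceil>L\<rceil>" by (simp only: of_int_le_iff)
    thus "u \<in> {-\<lceil>L\<rceil>..\<lceil>L\<rceil>}" by auto
  qed
  show fin: "finite U" using sub finite_subset by blast
  show "real (card U) \<le> 8 * L / m + 1"
  proof (cases "U = {}")
    case True thus ?thesis using L m by simp
  next
    case False
    define u0 where "u0 = Min U"
    have u0: "u0 \<in> U" "\<forall>u\<in>U. u0 \<le> u" using fin False unfolding u0_def by auto
    define phi where "phi = (\<lambda>u. 4 * (u - u0) div int m)"
    have phi: "int m * phi u = 4 * (u - u0)" if "u \<in> U" for u
      using cg that u0(1) unfolding phi_def by (metis dvd_mult_div_cancel)
    have inj: "inj_on phi U"
    proof (rule inj_onI)
      fix x y assume "x \<in> U" "y \<in> U" "phi x = phi y"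
      hence "4 * (x - u0) = 4 * (y - u0)" using phi by metis
      thus "x = y" by simp
    qed
    define N where "N = \<lfloor>8 * L / m\<rfloor>"
    have "phi ` U \<subseteq> {0..N}"
    proof
      fix k assume "k \<in> phi ` U"
      then obtain u where u: "u \<in> U" "k = phi u" by blast
      have e: "real m * real_of_int k = 4 * (real_of_int u - real_of_int u0)"
        using arg_cong[OF phi[OF u(1)], of real_of_int] u(2) by simp
      have "real_of_int \<bar>u\<bar> < L" "real_of_int \<bar>u0\<bar> < L" using bd u(1) u0(1) by auto
      hence "real_of_int u - real_of_int u0 < 2 * L" by linarith
      hence "real m * real_of_int k < real m * (8 * L / m)" using e m by simp
      hence "real_of_int k < 8 * L / m" using m by (meson mult_less_cancel_left_pos of_nat_0_less_iff)
      hence "k \<le> N" unfolding N_def by linarith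
      moreover have "0 \<le> real m * real_of_int k" using e u0(2) u(1) by simp
      hence "0 \<le> k" using m by (simp add: zero_le_mult_iff)
      ultimately show "k \<in> {0..N}" by simp
    qed
    hence "card (phi ` U) \<le> card {0..N}" by (intro card_mono) auto
    hence "card U \<le> nat (N + 1)" using card_image[OF inj] by simp
    moreover have "real_of_int N \<le> 8 * L / m" unfolding N_def by linarith
    moreover have "N \<ge> 0" unfolding N_def using L m by simp
    ultimately have "real (card U) \<le> real (nat (N + 1))" "real (nat (N + 1)) = real_of_int N + 1"
      by simp_all
    thus ?thesis using \<open>real_of_int N \<le> 8 * L / m\<close> by linarith
  qed
qed

lemma coprime_from_gcd:
  fixes n a b :: nat and q :: int
  assumes ab: "n = a * b" "coprime a b" and a: "int a = gcd (int n) q"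
  shows "coprime (int b) q"
proof -
  define g where "g = gcd (int b) q"
  have "g dvd int n" unfolding g_def ab(1) by (simp add: dvd_mult)
  moreover have "g dvd q" unfolding g_def by simp
  ultimately have "g dvd int a" unfolding a by simp
  moreover have "g dvd int b" unfolding g_def by simp
  moreover have "coprime (int a) (int b)" using ab(2) by simp
  ultimately have "is_unit g" by (metis coprime_common_divisor)
  thus ?thesis unfolding g_def by (simp add: coprime_iff_gcd_eq_1)
qed

definition UU :: "nat \<Rightarrow> real \<Rightarrow> nat \<Rightarrow> int \<Rightarrow> int \<Rightarrow> int set" where
  "UU n Y a t r = {u. real_of_int \<bar>u\<bar> < Y^2 \<and> int a dvd (2*r^2 + t*r + u) \<and> int (n div a) dvd ((t+r)^2 - 4*u)}"

lemma UU_bound: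
  assumes n: "n > 0" "squarefree n" and a: "a dvd n"
  shows "finite (UU n Y a t r)" "real (card (UU n Y a t r)) \<le> 8 * Y^2 / n + 1"
proof -
  define b where "b = n div a"
  have nab: "n = a * b" using a b_def by simp
  have cop: "coprime (int a) (int b)" using sqf_coprime[of a b] n(2) nab by simp
  have cg: "\<forall>u\<in>UU n Y a t r. \<forall>v\<in>UU n Y a t r. int n dvd 4 * (u - v)"
  proof (intro ballI)
    fix u v assume "u \<in> UU n Y a t r" "v \<in> UU n Y a t r"
    hence h: "int a dvd (2*r^2 + t*r + u)" "int a dvd (2*r^2 + t*r + v)"
      "int b dvd ((t+r)^2 - 4*u)" "int b dvd ((t+r)^2 - 4*v)" unfolding UU_def b_def by auto
    have "int a dvd (2*r^2 + t*r + u) - (2*r^2 + t*r + v)" using h(1,2) by (rule dvd_diff)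
    hence "int a dvd u - v" by simp
    hence "int a dvd 4 * (u - v)" by (rule dvd_mult)
    moreover have "int b dvd ((t+r)^2 - 4*v) - ((t+r)^2 - 4*u)" using h(4,3) by (rule dvd_diff)
    hence "int b dvd 4 * (u - v)" by (simp add: algebra_simps)
    ultimately have "int a * int b dvd 4 * (u - v)" using cop by (intro divides_mult)
    thus "int n dvd 4 * (u - v)" using nab by simp
  qed
  have bd: "\<forall>u\<in>UU n Y a t r. real_of_int \<bar>u\<bar> < Y^2" unfolding UU_def by auto
  show "finite (UU n Y a t r)" using card_cong_bound(1)[OF n(1) _ bd cg] by simp
  show "real (card (UU n Y a t r)) \<le> 8 * Y^2 / n + 1" using card_cong_bound(2)[OF n(1) _ bd cg] by simp
qed

lemma main_count:
  assumes n: "n > 0" "squarefree n" and Y: "Y > 1"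
  shows "real (card {f \<in> Sigma_red n. hgt f < Y}) \<le> real (card {a. a dvd n}) * 3 * (2*Y+1) * (8*Y^2/n + 1)"
proof -
  define Dv where "Dv = {a. a dvd n}"
  define T where "T = {-1, 0, 1::int}"
  define R where "R = {-\<lfloor>Y\<rfloor>..\<lfloor>Y\<rfloor>}"
  define W where "W = (\<Union>a\<in>Dv. \<Union>t\<in>T. \<Union>r\<in>R. mk t r ` UU n Y a t r)"
  have finDv: "finite Dv" unfolding Dv_def using n(1) by (simp add: finite_divisors_nat)
  have finT: "finite T" "card T = 3" unfolding T_def by auto
  have finR: "finite R" unfolding R_def by simp
  have finU: "finite (UU n Y a t r)" if "a \<in> Dv" for a t r using UU_bound(1)[OF n] that unfolding Dv_def by simp
  have sub: "{f \<in> Sigma_red n. hgt f < Y} \<subseteq> W"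
  proof
    fix f assume "f \<in> {f \<in> Sigma_red n. hgt f < Y}"
    hence f: "f \<in> Sigma_red n" "hgt f < Y" by auto
    obtain t r u where tru: "t \<in> {-1,0,1}" "f = mk t r u" "disc3 f \<noteq> 0" "int n dvd disc3 f"
      using sigma_struct[OF f(1) n] by blast
    have hr: "real_of_int \<bar>r\<bar> < Y" and hu: "real_of_int \<bar>u\<bar> < Y^2" using mk_hgt f(2) tru(2) by auto
    have "\<bar>r\<bar> \<le> \<lfloor>Y\<rfloor>" using hr by (simp add: le_floor_iff)
    hence rR: "r \<in> R" unfolding R_def by auto
    define q where "q = 2*r^2 + t*r + u"
    define D where "D = (t+r)^2 - 4*u"
    have disc: "disc3 f = q^2 * D" unfolding tru(2) q_def D_def by (rule disc_mk)
    define a where "a = nat (gcd (int n) q)"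
    have ia: "int a = gcd (int n) q" unfolding a_def by simp
    have "int a dvd int n" unfolding ia by simp
    hence adv: "a dvd n" by simp
    define b where "b = n div a"
    have nab: "n = a * b" using adv b_def by simp
    have cop: "coprime a b" using sqf_coprime[of a b] n(2) nab by simp
    have cbq: "coprime (int b) q" by (rule coprime_from_gcd[OF nab cop ia])
    hence "coprime (int b) (q^2)" by simp
    moreover have "int b dvd q^2 * D"
    proof -
      have "int b dvd int n" using nab by simp
      hence "int b dvd disc3 f" using tru(4) by (rule dvd_trans)
      thus ?thesis using disc by simp
    qed
    ultimately have bD: "int b dvd D" by (simp add: coprime_dvd_mult_right_iff)
    have aq: "int a dvd q" unfolding ia by simp
    have "u \<in> UU n Y a t r" unfolding UU_def using hu aq bD b_def q_def D_def by simp
    moreover have "a \<in> Dv" "t \<in> T" using adv tru(1) unfolding Dv_def T_def by auto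
    ultimately show "f \<in> W" unfolding W_def using rR tru(2) by blast
  qed
  have finW: "finite W" unfolding W_def using finDv finT finR finU by blast
  have "card {f \<in> Sigma_red n. hgt f < Y} \<le> card W" by (rule card_mono[OF finW sub])
  also have "\<dots> \<le> (\<Sum>a\<in>Dv. card (\<Union>t\<in>T. \<Union>r\<in>R. mk t r ` UU n Y a t r))"
    unfolding W_def using finDv by (rule card_UN_le)
  also have "\<dots> \<le> (\<Sum>a\<in>Dv. \<Sum>t\<in>T. card (\<Union>r\<in>R. mk t r ` UU n Y a t r))"
    by (intro sum_mono card_UN_le finT)
  also have "\<dots> \<le> (\<Sum>a\<in>Dv. \<Sum>t\<in>T. \<Sum>r\<in>R. card (mk t r ` UU n Y a t r))"
    by (intro sum_mono card_UN_le finR)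
  also have "\<dots> \<le> (\<Sum>a\<in>Dv. \<Sum>t\<in>T. \<Sum>r\<in>R. card (UU n Y a t r))"
    by (intro sum_mono card_image_le finU) auto
  finally have c1: "real (card {f \<in> Sigma_red n. hgt f < Y}) \<le> (\<Sum>a\<in>Dv. \<Sum>t\<in>T. \<Sum>r\<in>R. real (card (UU n Y a t r)))"
    by (simp only: of_nat_le_iff of_nat_sum[symmetric])
  also have "\<dots> \<le> (\<Sum>a\<in>Dv. \<Sum>t\<in>T. \<Sum>r\<in>R. 8 * Y^2 / n + 1)"
    by (intro sum_mono) (use UU_bound(2)[OF n] in \<open>auto simp: Dv_def\<close>)
  also have "\<dots> = real (card Dv) * (3 * (real (card R) * (8 * Y^2 / n + 1)))"
    using finT by simp
  also have "\<dots> \<le> real (card Dv) * (3 * ((2 * Y + 1) * (8 * Y^2 / n + 1)))"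
  proof -
    have "\<lfloor>Y\<rfloor> \<ge> 0" using Y by simp
    hence "real (card R) = 2 * real_of_int \<lfloor>Y\<rfloor> + 1" unfolding R_def by simp
    hence "real (card R) \<le> 2 * Y + 1" by linarith
    moreover have "0 \<le> 8 * Y^2 / n + 1" by simp
    ultimately show ?thesis by (intro mult_left_mono mult_right_mono) auto
  qed
  finally show ?thesis unfolding Dv_def by (simp only: mult.assoc)
qed




lemma small_Y_empty:
  assumes n: "n > 0" "squarefree n" and Y: "Y \<le> 1"
  shows "{f \<in> Sigma_red n. hgt f < Y} = {}"
proof (rule ccontr)
  assume "{f \<in> Sigma_red n. hgt f < Y} \<noteq> {}"
  then obtain f where f: "f \<in> Sigma_red n" "hgt f < Y" by blast
  obtain t r u where tru: "t \<in> {-1,0,1}" "f = mk t r u" "disc3 f \<noteq> 0"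
    using sigma_struct[OF f(1) n] by blast
  have hr: "real_of_int \<bar>r\<bar> < Y" and hu: "real_of_int \<bar>u\<bar> < Y^2" using mk_hgt f(2) tru(2) by auto
  have "Y > 0" using hr by linarith
  hence "Y^2 \<le> 1" using Y by (simp add: power_le_one)
  hence "\<bar>u\<bar> < 1" "\<bar>r\<bar> < 1" using hr hu Y by linarith+
  hence "u = 0" "r = 0" by auto
  thus False using tru(2,3) by (simp add: disc_mk)
qed

theorem proposition3p4:
  shows "\<forall>\<epsilon>::real. \<epsilon> > 0 \<longrightarrow> (\<exists>C::real. \<forall>(n::nat) (Y::real).
     n > 0 \<longrightarrow> squarefree n \<longrightarrow> Y > 0 \<longrightarrow>
     real (card {f \<in> Sigma_red n. hgt f < Y})
       \<le> C * (Y ^ 3 / real n powr (1 - \<epsilon>) + real n powr \<epsilon> * Y))"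
proof (intro allI impI)
  fix eps :: real assume eps: "eps > 0"
  obtain K where K: "K > 0" "\<And>n. squarefree n \<Longrightarrow> n > 0 \<Longrightarrow> real (card {a. a dvd n}) \<le> K * real n powr eps"
    using divisor_bound[OF eps] by blast
  show "\<exists>C::real. \<forall>(n::nat) (Y::real). n > 0 \<longrightarrow> squarefree n \<longrightarrow> Y > 0 \<longrightarrow>
     real (card {f \<in> Sigma_red n. hgt f < Y}) \<le> C * (Y ^ 3 / real n powr (1 - eps) + real n powr eps * Y)"
  proof (intro exI[of _ "72 * K"] allI impI)
    fix n :: nat and Y :: real
    assume n: "n > 0" "squarefree n" and Y: "Y > 0"
    have rhs0: "0 \<le> 72 * K * (Y ^ 3 / real n powr (1 - eps) + real n powr eps * Y)"
      using K(1) Y by simp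
    show "real (card {f \<in> Sigma_red n. hgt f < Y}) \<le> 72 * K * (Y ^ 3 / real n powr (1 - eps) + real n powr eps * Y)"
    proof (cases "Y \<le> 1")
      case True thus ?thesis using rhs0 by (simp only: small_Y_empty[OF n True] card.empty of_nat_0)
    next
      case False
      hence Y1: "Y > 1" by simp
      define tau where "tau = real (card {a. a dvd n})"
      have tau: "0 \<le> tau" "tau \<le> K * real n powr eps" using K(2)[OF n(2,1)] by (auto simp: tau_def)
      have npos: "real n > 0" using n by simp
      have "real (card {f \<in> Sigma_red n. hgt f < Y}) \<le> tau * 3 * (2*Y+1) * (8*Y^2/n + 1)"
        using main_count[OF n Y1] by (simp add: tau_def)
      also have "\<dots> \<le> tau * 3 * (3*Y) * (8*Y^2/n + 1)"
        using tau(1) Y1 npos by (intro mult_right_mono mult_left_mono) auto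
      also have "\<dots> = 9 * tau * (8 * (Y^3 / n) + Y)"
        by (simp add: algebra_simps power2_eq_square power3_eq_cube)
      also have "\<dots> \<le> 72 * tau * (Y^3 / n + Y)"
        using tau(1) Y npos by (simp add: algebra_simps)
      also have "\<dots> \<le> 72 * (K * real n powr eps) * (Y^3 / n + Y)"
        using tau Y npos by (intro mult_right_mono mult_left_mono) auto
      also have "\<dots> = 72 * K * (Y ^ 3 / real n powr (1 - eps) + real n powr eps * Y)"
      proof -
        define P where "P = real n powr eps"
        define Q where "Q = real n powr (1 - eps)"
        have P: "P > 0" and Q: "Q > 0" using npos by (auto simp: P_def Q_def)
        have PQ: "P * Q = real n" unfolding P_def Q_def using npos by (simp add: powr_add[symmetric])
        have "P * (Y^3 / real n) = P * Y^3 / (P * Q)" by (simp add: PQ)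
        also have "\<dots> = Y^3 / Q" using P by simp
        finally have e: "P * (Y^3 / real n) = Y^3 / Q" .
        have "72 * (K * P) * (Y^3 / n + Y) = 72 * K * (P * (Y^3 / real n) + P * Y)" by (simp add: algebra_simps)
        also have "\<dots> = 72 * K * (Y^3 / Q + P * Y)" unfolding e ..
        finally show ?thesis unfolding P_def Q_def .
      qed
      finally show ?thesis .
    qed
  qed
qed



end
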